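(* Let $m\in\mathbb N$, $p(\cdot),p_1(\cdot),\dots,p_m(\cdot)\in LH\cap\mathcal P$ with $\frac1{p(\cdot)}=\sum_{i=1}^m\frac1{p_i(\cdot)}$, $\omega_i\in A_{p_i(\cdot)}$ ($i=1,\dots,m$), $v\in A_{p(\cdot)}$, and positive measurable $\varphi_{11},\dots,\varphi_{1m},\varphi_2$ on $\mathbb R^n\times(0,\infty)$ with $$\sup_{x\in\mathbb R^n,r>0}\varphi_2(x,r)^{-1}\int_r^\infty\frac{\operatorname*{ess\,inf}_{t<\eta<\infty}\prod_{i=1}^m\varphi_{1i}(x,\eta)\|\omega_i\|_{L^{p_i(\cdot)}(B(x,\eta))}}{\prod_{i=1}^m\|\omega_i\|_{L^{p_i(\cdot)}(B(x,t))}}\frac{dt}t<\infty.$$ Let $T$ be an $m$-sublinear operator with $T\in LS\big(\prod_iM^{p_i(\cdot),\varphi_{1i}}(\omega_i)\big)\cap LB\big(\prod_iM^{p_i(\cdot),\varphi_{1i}}(\omega_i)\to M^{p(\cdot),\varphi_2}(v)\big)$. Then $T$ is bounded from $M^{p_1(\cdot),\varphi_{11}}(\omega_1)\times\cdots\times M^{p_m(\cdot),\varphi_{1m}}(\omega_m)$ to $M^{p(\cdot),\varphi_2}(v)$.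
   Context: Variable exponents: $\mathcal P$ is the set of measurable $p:\mathbb R^n\to[1,\infty)$ with $1<\operatorname{ess\,inf}p\le\operatorname{ess\,sup}p<\infty$; $p'(\cdot)=p(\cdot)/(p(\cdot)-1)$. $\|f\|_{L^{p(\cdot)}(E)}=\inf\{\lambda>0:\int_E(|f|/\lambda)^{p(x)}dx\le1\}$. $LH$ is the class of globally log-Hölder continuous exponents: $|p(x)-p(y)|\le C/(-\log|x-y|)$ for $|x-y|\le1/2$ and $|p(x)-p(y)|\le C/\log(e+|x|)$ for $|y|\ge|x|$. For a weight $\omega$: $\|f\|_{L^{p(\cdot)}(E,\omega dx)}=\|\omega f\|_{L^{p(\cdot)}(E)}$; $\omega\in A_{p(\cdot)}$ means $\sup_B|B|^{-1}\|\omega\|_{L^{p(\cdot)}(B)}\|\omega^{-1}\|_{L^{p'(\cdot)}(B)}<\infty$. Generalized weighted variable exponent Morrey space: $\|f\|_{M^{p(\cdot),\varphi}(\omega)}=\sup_{x,r>0}\varphi(x,r)^{-1}\|\omega\|_{L^{p(\cdot)}(B(x,r))}^{-1}\|f\chi_{B(x,r)}\|_{L^{p(\cdot)}(\omega dx)}$. An $m$-sublinear operator is sublinear in each argument. For a ball $B$: $f_i^0=f_i\chi_{2B}$, $f_i^\infty=f_i\chi_{(2B)^c}$. $T\in LS(\prod_iX_i)$: there is $C$ such that for every ball $B$, $f_i\in X_i$, $(\alpha_1,\dots,\alpha_m)\in\{0,\infty\}^m$ not all $0$: $\|T(f_1^{\alpha_1},\dots,f_m^{\alpha_m})\|_{L^\infty(B)}\le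 C\sum_{j\ge1}\prod_i\frac1{|2^{j+1}B|}\int_{2^{j+1}B}|f_i|$. $T\in LB(\prod_iX_i\to Y)$: there is $C$ with $\|T(f_1^0,\dots,f_m^0)\|_Y\le C\prod_i\|f_i\|_{X_i}$ for every ball $B$ and $f_i\in X_i$. *)

theory Defs
  imports "HOL-Analysis.Analysis"
begin

text \<open>Space R^n is modelled by a type 'a of class euclidean_space; Lebesgue measure is lebesgue.
  Norms are valued in ennreal (infimum of the empty set is infinity).\<close>

definition var_modular :: "('a::euclidean_space \<Rightarrow> real) \<Rightarrow> 'a set \<Rightarrow> ('a \<Rightarrow> real) \<Rightarrow> ennreal" where
  "var_modular p E f = (\<integral>\<^sup>+ y. indicator E y * ennreal (\<bar>f y\<bar> powr p y) \<partial>lebesgue)"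

definition var_norm :: "('a::euclidean_space \<Rightarrow> real) \<Rightarrow> 'a set \<Rightarrow> ('a \<Rightarrow> real) \<Rightarrow> ennreal" where
  "var_norm p E f = Inf {ennreal l | l. 0 < l \<and> var_modular p E (\<lambda>y. f y / l) \<le> 1}"

definition conj_exp :: "('a \<Rightarrow> real) \<Rightarrow> 'a \<Rightarrow> real" where
  "conj_exp p = (\<lambda>x. p x / (p x - 1))"

definition exponent_P :: "('a::euclidean_space \<Rightarrow> real) \<Rightarrow> bool" where
  "exponent_P p \<longleftrightarrow> p \<in> borel_measurable lebesgue \<and> (\<forall>x. 1 \<le> p x) \<and>
     (\<exists>pm pM. 1 < pm \<and> (AE x in lebesgue. pm \<le> p x \<and> p x \<le> pM))"

definition exponent_LH :: "('a::euclidean_space \<Rightarrow> real) \<Rightarrow> bool" where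
  "exponent_LH p \<longleftrightarrow> (\<exists>C.
     (\<forall>x y. 0 < dist x y \<and> dist x y \<le> 1/2 \<longrightarrow> \<bar>p x - p y\<bar> \<le> C / (- ln (dist x y))) \<and>
     (\<forall>x y. norm x \<le> norm y \<longrightarrow> \<bar>p x - p y\<bar> \<le> C / ln (exp 1 + norm x)))"

definition weight :: "('a::euclidean_space \<Rightarrow> real) \<Rightarrow> bool" where
  "weight w \<longleftrightarrow> w \<in> borel_measurable lebesgue \<and> (\<forall>x. 0 < w x)"

definition A_weight :: "('a::euclidean_space \<Rightarrow> real) \<Rightarrow> ('a \<Rightarrow> real) \<Rightarrow> bool" where
  "A_weight p w \<longleftrightarrow> weight w \<and>
     (SUP z\<in>UNIV \<times> {0<..}. var_norm p (ball (fst z) (snd z)) w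
        * var_norm (conj_exp p) (ball (fst z) (snd z)) (\<lambda>y. 1 / w y)
        / emeasure lebesgue (ball (fst z) (snd z))) < \<infinity>"

definition morrey_norm :: "('a::euclidean_space \<Rightarrow> real) \<Rightarrow> ('a \<Rightarrow> real \<Rightarrow> real) \<Rightarrow> ('a \<Rightarrow> real)
    \<Rightarrow> ('a \<Rightarrow> real) \<Rightarrow> ennreal" where
  "morrey_norm p \<phi> w f = (SUP z\<in>UNIV \<times> {0<..}.
      var_norm p (ball (fst z) (snd z)) (\<lambda>y. w y * f y)
      / (ennreal (\<phi> (fst z) (snd z)) * var_norm p (ball (fst z) (snd z)) w))"

definition morrey_space :: "('a::euclidean_space \<Rightarrow> real) \<Rightarrow> ('a \<Rightarrow> real \<Rightarrow> real) \<Rightarrow> ('a \<Rightarrow> real)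
    \<Rightarrow> ('a \<Rightarrow> real) set" where
  "morrey_space p \<phi> w = {f. f \<in> borel_measurable lebesgue \<and> morrey_norm p \<phi> w f < \<infinity>}"

definition pos_meas_fun :: "('a::euclidean_space \<Rightarrow> real \<Rightarrow> real) \<Rightarrow> bool" where
  "pos_meas_fun \<phi> \<longleftrightarrow> (\<forall>x r. 0 < r \<longrightarrow> 0 < \<phi> x r) \<and>
     (\<lambda>z. \<phi> (fst z) (snd z)) \<in> borel_measurable (lebesgue_on (UNIV \<times> {0<..}))"

definition essinf_on :: "real set \<Rightarrow> (real \<Rightarrow> ennreal) \<Rightarrow> ennreal" where
  "essinf_on S g = Sup {c. AE t in lborel. t \<in> S \<longrightarrow> c \<le> g t}"

definition Linf_norm :: "'a::euclidean_space set \<Rightarrow> ('a \<Rightarrow> real) \<Rightarrow> ennreal" where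
  "Linf_norm B g = Inf {c. AE y in lebesgue. y \<in> B \<longrightarrow> ennreal \<bar>g y\<bar> \<le> c}"

text \<open>Operators act on lists of m functions. X i is the i-th space (i < m).\<close>
definition in_prod :: "nat \<Rightarrow> (nat \<Rightarrow> ('a \<Rightarrow> real) set) \<Rightarrow> ('a \<Rightarrow> real) list \<Rightarrow> bool" where
  "in_prod m X fs \<longleftrightarrow> length fs = m \<and> (\<forall>i<m. fs ! i \<in> X i)"

definition m_sublinear :: "nat \<Rightarrow> (nat \<Rightarrow> ('a \<Rightarrow> real) set) \<Rightarrow> (('a \<Rightarrow> real) list \<Rightarrow> 'a \<Rightarrow> real) \<Rightarrow> bool" where
  "m_sublinear m X T \<longleftrightarrow> (\<forall>fs i g h c x. in_prod m X fs \<and> i < m \<and> g \<in> X i \<and> h \<in> X i \<longrightarrow>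
      \<bar>T (fs[i := (\<lambda>y. g y + h y)]) x\<bar> \<le> \<bar>T (fs[i := g]) x\<bar> + \<bar>T (fs[i := h]) x\<bar> \<and>
      \<bar>T (fs[i := (\<lambda>y. c * g y)]) x\<bar> = \<bar>c\<bar> * \<bar>T (fs[i := g]) x\<bar>)"

text \<open>f^alpha for the ball B(x,r): index i gets f_i chi_{(2B)^c} if i in S (alpha_i = oo),
  and f_i chi_{2B} otherwise (alpha_i = 0).\<close>
definition trunc_list :: "nat \<Rightarrow> nat set \<Rightarrow> 'a::euclidean_space \<Rightarrow> real \<Rightarrow> ('a \<Rightarrow> real) list \<Rightarrow> ('a \<Rightarrow> real) list" where
  "trunc_list m S x r fs = map (\<lambda>i. (\<lambda>y. (if i \<in> S then indicator (- ball x (2 * r)) y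
        else indicator (ball x (2 * r)) y) * (fs ! i) y)) [0..<m]"

definition LS_class :: "nat \<Rightarrow> (nat \<Rightarrow> ('a::euclidean_space \<Rightarrow> real) set) \<Rightarrow> (('a \<Rightarrow> real) list \<Rightarrow> 'a \<Rightarrow> real) \<Rightarrow> bool" where
  "LS_class m X T \<longleftrightarrow> (\<exists>C::real. \<forall>x r fs S. 0 < r \<and> in_prod m X fs \<and> S \<subseteq> {..<m} \<and> S \<noteq> {} \<longrightarrow>
      Linf_norm (ball x r) (T (trunc_list m S x r fs)) \<le>
        ennreal C * (\<Sum>j. \<Prod>i<m. (\<integral>\<^sup>+ y. indicator (ball x (2 ^ (j + 2) * r)) y * ennreal \<bar>(fs ! i) y\<bar> \<partial>lebesgue)
                                 / emeasure lebesgue (ball x (2 ^ (j + 2) * r))))"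

definition LB_class :: "nat \<Rightarrow> (nat \<Rightarrow> ('a::euclidean_space \<Rightarrow> real) set) \<Rightarrow> (nat \<Rightarrow> ('a \<Rightarrow> real) \<Rightarrow> ennreal)
    \<Rightarrow> (('a \<Rightarrow> real) \<Rightarrow> ennreal) \<Rightarrow> (('a \<Rightarrow> real) list \<Rightarrow> 'a \<Rightarrow> real) \<Rightarrow> bool" where
  "LB_class m X Xnorm Ynorm T \<longleftrightarrow> (\<exists>C::real. \<forall>x r fs. 0 < r \<and> in_prod m X fs \<longrightarrow>
      Ynorm (T (trunc_list m {} x r fs)) \<le> ennreal C * (\<Prod>i<m. Xnorm i (fs ! i)))"

end

theory Submission
  imports Defs
begin


lemma ediv_le_imp: fixes a b c :: ennreal
  assumes "b \<noteq> 0" "b \<noteq> top" "a / b \<le> c" shows "a \<le> c * b"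
proof -
  have "a = (a / b) * b" using assms
    by (simp add: ennreal_divide_times less_top)
  also have "\<dots> \<le> c * b" using assms(3) by (intro mult_right_mono) auto
  finally show ?thesis .
qed

lemma ele_div_intro: fixes a b c :: ennreal
  assumes "b \<noteq> 0" "b \<noteq> top" "a * b \<le> c" shows "a \<le> c / b"
proof -
  have "a = (a * b) / b" using assms by (simp add: ennreal_mult_divide_eq)
  also have "\<dots> \<le> c / b" using assms(3) by (intro divide_right_mono_ennreal)
  finally show ?thesis .
qed

lemma vn_le_ennreal:
  assumes "0 < l" "var_modular p E (\<lambda>y. f y / l) \<le> 1"
  shows "var_norm p E f \<le> ennreal l"
  unfolding var_norm_def using assms by (intro Inf_lower) auto

lemma vmod_mono:
  assumes "\<forall>y. 0 \<le> p y" "AE y in lebesgue. y \<in> E \<longrightarrow> \<bar>f y\<bar> \<le> \<bar>g y\<bar>"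
  shows "var_modular p E f \<le> var_modular p E g"
  unfolding var_modular_def
  using assms(2) by (intro nn_integral_mono_AE) (auto elim!: eventually_mono
      intro!: mult_left_mono ennreal_leI powr_mono2 assms(1)[rule_format] split: split_indicator)

lemma vn_less_imp:
  assumes "var_norm p E f < ennreal l" "0 < l" "\<forall>y. 0 \<le> p y"
  shows "var_modular p E (\<lambda>y. f y / l) \<le> 1"
proof -
  from assms(1) obtain l' where l': "0 < l'" "var_modular p E (\<lambda>y. f y / l') \<le> 1" "ennreal l' < ennreal l"
    unfolding var_norm_def by (auto simp: Inf_less_iff)
  then have "l' < l" using assms(2) by (simp add: ennreal_less_iff)
  have "var_modular p E (\<lambda>y. f y / l) \<le> var_modular p E (\<lambda>y. f y / l')"
    using assms(3) l' \<open>l' < l\<close> 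
    by (intro vmod_mono) (auto simp: abs_divide intro!: divide_left_mono)
  with l' show ?thesis by simp
qed

lemma vn_le_intro:
  assumes "\<And>l. 0 < l \<Longrightarrow> a < ennreal l \<Longrightarrow> var_modular p E (\<lambda>y. f y / l) \<le> 1"
  shows "var_norm p E f \<le> a"
proof (rule ennreal_le_epsilon)
  fix e :: real assume "a < top" "0 < e"
  then obtain a' where a': "a = ennreal a'" "0 \<le> a'" by (cases a) auto
  have "var_norm p E f \<le> ennreal (a' + e)"
    using \<open>0 < e\<close> a' by (intro vn_le_ennreal assms) (auto simp: ennreal_less_iff)
  then show "var_norm p E f \<le> a + ennreal e" using a' \<open>0<e\<close> by (simp add: ennreal_plus)
qed

lemma vn_mono:
  assumes "\<forall>y. 0 \<le> p y" "AE y in lebesgue. y \<in> E \<longrightarrow> \<bar>f y\<bar> \<le> \<bar>g y\<bar>"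
  shows "var_norm p E f \<le> var_norm p E g"
proof (rule vn_le_intro)
  fix l :: real assume l: "0 < l" "var_norm p E g < ennreal l"
  have "var_modular p E (\<lambda>y. f y / l) \<le> var_modular p E (\<lambda>y. g y / l)"
    using assms(2) l by (intro vmod_mono[OF assms(1)]) (auto elim!: eventually_mono simp: abs_divide divide_right_mono)
  also have "\<dots> \<le> 1" using vn_less_imp[OF l(2) l(1) assms(1)] .
  finally show "var_modular p E (\<lambda>y. f y / l) \<le> 1" .
qed

lemma vn_set_mono:
  assumes "E \<subseteq> F"
  shows "var_norm p E f \<le> var_norm p F f"
  unfolding var_norm_def var_modular_def
proof (intro Inf_superset_mono, safe)
  fix l assume "0 < l" "(\<integral>\<^sup>+ y. indicator F y * ennreal (\<bar>f y / l\<bar> powr p y) \<partial>lebesgue) \<le> 1"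
  moreover have "(\<integral>\<^sup>+ y. indicator E y * ennreal (\<bar>f y / l\<bar> powr p y) \<partial>lebesgue)
     \<le> (\<integral>\<^sup>+ y. indicator F y * ennreal (\<bar>f y / l\<bar> powr p y) \<partial>lebesgue)"
    using assms by (intro nn_integral_mono) (auto split: split_indicator)
  ultimately show "\<exists>la. ennreal l = ennreal la \<and> 0 < la \<and>
    (\<integral>\<^sup>+ y. indicator E y * ennreal (\<bar>f y / la\<bar> powr p y) \<partial>lebesgue) \<le> 1" by force
qed

lemma vn_scale:
  assumes "0 \<le> c" "\<forall>y. 0 \<le> p y"
  shows "var_norm p E (\<lambda>y. c * f y) \<le> ennreal c * var_norm p E f"
proof (rule vn_le_intro)
  fix l :: real assume l: "0 < l" "ennreal c * var_norm p E f < ennreal l"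
  show "var_modular p E (\<lambda>y. c * f y / l) \<le> 1"
  proof (cases "c = 0")
    case True then show ?thesis by (simp add: var_modular_def)
  next
    case False
    then have c: "0 < c" using assms by auto
    have "var_norm p E f \<noteq> top" using l c by (auto simp: ennreal_mult_top)
    then obtain n where n: "var_norm p E f = ennreal n" "0 \<le> n" by (cases "var_norm p E f") auto
    have "c * n < l" using l n c by (simp add: ennreal_mult'[symmetric] ennreal_less_iff)
    then have "n < l / c" using c by (simp add: field_simps)
    then have "var_norm p E f < ennreal (l / c)" using n by (simp add: ennreal_less_iff)
    from vn_less_imp[OF this _ assms(2)] c l
    have "var_modular p E (\<lambda>y. f y / (l / c)) \<le> 1" by simp
    moreover have "(\<lambda>y. f y / (l / c)) = (\<lambda>y. c * f y / l)" using c by (auto simp: field_simps)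
    ultimately show ?thesis by simp
  qed
qed



lemma nn_integral_add_le:
  assumes [measurable]: "G \<in> borel_measurable M"
  shows "(\<integral>\<^sup>+x. F x + G x \<partial>M) \<le> (\<integral>\<^sup>+x. F x \<partial>M) + (\<integral>\<^sup>+x. G x \<partial>M)"
proof -
  have "(\<integral>\<^sup>+x. F x + G x \<partial>M) = (SUP s \<in> {s. simple_function M s \<and> s \<le> (\<lambda>x. F x + G x) \<and> (\<forall>x. s x < top)}. integral\<^sup>S M s)"
    by (rule nn_integral_def_finite)
  also have "\<dots> \<le> (\<integral>\<^sup>+x. F x \<partial>M) + (\<integral>\<^sup>+x. G x \<partial>M)"
  proof (rule SUP_least)
    fix s assume s: "s \<in> {s. simple_function M s \<and> s \<le> (\<lambda>x. F x + G x) \<and> (\<forall>x. s x < top)}"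
    then have sm[measurable]: "s \<in> borel_measurable M" by (auto intro: borel_measurable_simple_function)
    have "integral\<^sup>S M s = integral\<^sup>N M s" using s by (simp add: nn_integral_eq_simple_integral)
    also have "\<dots> \<le> (\<integral>\<^sup>+x. (s x - G x) + G x \<partial>M)"
      by (intro nn_integral_mono) (auto simp add: diff_add_self_ennreal)
    also have "\<dots> = (\<integral>\<^sup>+x. s x - G x \<partial>M) + (\<integral>\<^sup>+x. G x \<partial>M)"
      by (rule nn_integral_add) auto
    also have "(\<integral>\<^sup>+x. s x - G x \<partial>M) \<le> (\<integral>\<^sup>+x. F x \<partial>M)"
    proof (intro nn_integral_mono)
      fix x have "s x \<le> F x + G x" "s x < top" using s by (auto simp: le_fun_def)
      then show "s x - G x \<le> F x" by (auto simp: ennreal_minus_le_iff add.commute)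
    qed
    finally show "integral\<^sup>S M s \<le> (\<integral>\<^sup>+x. F x \<partial>M) + (\<integral>\<^sup>+x. G x \<partial>M)" by (simp add: add_right_mono)
  qed
  finally show ?thesis .
qed

lemma nn_integral_cmult_le:
  assumes "c < top"
  shows "(\<integral>\<^sup>+x. c * F x \<partial>M) \<le> c * (\<integral>\<^sup>+x. F x \<partial>M)"
proof (cases "c = 0")
  case True then show ?thesis by simp
next
  case False
  have "(\<integral>\<^sup>+x. c * F x \<partial>M) = (SUP s \<in> {s. simple_function M s \<and> s \<le> (\<lambda>x. c * F x)}. integral\<^sup>S M s)"
    by (simp add: nn_integral_def)
  also have "\<dots> \<le> c * (\<integral>\<^sup>+x. F x \<partial>M)"
  proof (rule SUP_least)
    fix s assume s: "s \<in> {s. simple_function M s \<and> s \<le> (\<lambda>x. c * F x)}"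
    then have sm[measurable]: "s \<in> borel_measurable M" by (auto intro: borel_measurable_simple_function)
    have eq: "\<And>x. c * (s x / c) = s x" using False assms
      by (simp add: ennreal_times_divide mult.commute[of c] ennreal_mult_divide_eq)
    have "integral\<^sup>S M s = integral\<^sup>N M s" using s by (simp add: nn_integral_eq_simple_integral)
    also have "\<dots> = (\<integral>\<^sup>+x. c * (s x / c) \<partial>M)" by (simp add: eq)
    also have "\<dots> = c * (\<integral>\<^sup>+x. s x / c \<partial>M)" by (rule nn_integral_cmult) auto
    also have "(\<integral>\<^sup>+x. s x / c \<partial>M) \<le> (\<integral>\<^sup>+x. F x \<partial>M)"
    proof (intro nn_integral_mono)
      fix x have "s x \<le> c * F x" using s by (auto simp: le_fun_def)
      then show "s x / c \<le> F x" using False by (intro divide_le_posI_ennreal) (auto simp: zero_less_iff_neq_zero)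
    qed
    finally show "integral\<^sup>S M s \<le> c * (\<integral>\<^sup>+x. F x \<partial>M)" by (simp add: mult_left_mono)
  qed
  finally show ?thesis .
qed

lemma young_lite:
  fixes a b p :: real
  assumes "0 \<le> a" "0 \<le> b" "1 < p"
  shows "a * b \<le> a powr p + b powr (p / (p - 1))"
proof (cases "b = 0")
  case True then show ?thesis using assms by simp
next
  case False
  then have b: "0 < b" using assms by simp
  show ?thesis
  proof (cases "a \<le> b powr (1 / (p - 1))")
    case True
    have "a * b \<le> b powr (1 / (p - 1)) * b" using True b by (intro mult_right_mono) auto
    also have "\<dots> = b powr (1 / (p - 1) + 1)" using b by (simp add: powr_add)
    also have "1 / (p - 1) + 1 = p / (p - 1)" using assms by (simp add: field_simps)
    finally show ?thesis by (smt (verit) assms(1) powr_ge_zero)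
  next
    case False
    then have a: "0 < a" using b by (smt (verit) powr_ge_zero)
    have "b = (b powr (1 / (p - 1))) powr (p - 1)" using b assms by (simp add: powr_powr)
    also have "\<dots> \<le> a powr (p - 1)" using False assms by (intro powr_mono2) auto
    finally have "a * b \<le> a * a powr (p - 1)" using a by simp
    also have "\<dots> = a powr 1 * a powr (p - 1)" using a by simp
    also have "\<dots> = a powr p" using powr_add[of a 1 "p - 1"] by simp
    finally show ?thesis by (smt (verit) powr_ge_zero)
  qed
qed

lemma split_powr:
  fixes x a b p :: real
  assumes "0 \<le> x" "0 \<le> a" "0 \<le> b" "x \<le> (a + b) / 4" "1 \<le> p"
  shows "x powr p \<le> a powr p / 2 + b powr p / 2"
proof -
  let ?M = "max a b"
  have x: "x \<le> ?M / 2" using assms by (auto simp: max_def)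
  have "x powr p \<le> (?M / 2) powr p" using assms x by (intro powr_mono2) auto
  also have "\<dots> = ?M powr p / 2 powr p" using assms by (simp add: powr_divide)
  also have "\<dots> \<le> ?M powr p / 2"
  proof -
    have "2 powr 1 \<le> 2 powr p" using assms by (intro powr_mono) auto
    then show ?thesis by (intro divide_left_mono) auto
  qed
  also have "\<dots> \<le> a powr p / 2 + b powr p / 2" by (auto simp: max_def)
  finally show ?thesis .
qed



lemma half_sum: fixes A B :: real assumes "0 \<le> A" "0 \<le> B"
  shows "ennreal (1/2*A + 1/2*B) = ennreal (1/2) * ennreal A + ennreal (1/2) * ennreal B"
proof -
  have "ennreal (1/2*A + 1/2*B) = ennreal (1/2*A) + ennreal (1/2*B)" by (rule ennreal_plus) (use assms in auto)
  also have "\<dots> = ennreal (1/2) * ennreal A + ennreal (1/2) * ennreal B" using assms by (simp only: ennreal_mult)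
  finally show ?thesis .
qed

lemma vn_sum2:
  assumes pm[measurable]: "p \<in> borel_measurable lebesgue" and p1: "\<forall>y. 1 \<le> p y"
    and E[measurable]: "E \<in> sets lebesgue" and vm[measurable]: "v \<in> borel_measurable lebesgue"
    and L: "0 \<le> L"
    and h: "AE y in lebesgue. y \<in> E \<longrightarrow> \<bar>h y\<bar> \<le> \<bar>g y\<bar> + L * \<bar>v y\<bar>"
  shows "var_norm p E h \<le> 4 * (var_norm p E g + ennreal L * var_norm p E v)"
proof (rule vn_le_intro)
  fix l :: real assume l: "0 < l" "4 * (var_norm p E g + ennreal L * var_norm p E v) < ennreal l"
  have p0: "\<forall>y. 0 \<le> p y" using p1 by (auto intro: order_trans[OF zero_le_one])
  define l' where "l' = l / 4"
  have l'0: "0 < l'" using l by (simp add: l'_def)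
  have fin: "var_norm p E g + ennreal L * var_norm p E v < top"
  proof (rule ccontr)
    assume "\<not> ?thesis"
    then have "var_norm p E g + ennreal L * var_norm p E v = top" using less_top by blast
    then have "4 * (var_norm p E g + ennreal L * var_norm p E v) = top" by (metis ennreal_mult_eq_top_iff zero_neq_numeral)
    with l(2) show False using ennreal_less_top[of l] by (metis order.strict_trans order_less_irrefl)
  qed
  then have "var_norm p E g < top" "ennreal L * var_norm p E v < top" by auto
  then obtain a b where ab: "var_norm p E g = ennreal a" "ennreal L * var_norm p E v = ennreal b" "0 \<le> a" "0 \<le> b"
    unfolding less_top_ennreal by blast
  have "ennreal (4 * (a + b)) = 4 * (ennreal a + ennreal b)" using ab(3,4) by (simp add: ennreal_mult ennreal_plus)
  then have "ennreal (4 * (a + b)) < ennreal l" using l(2) ab(1,2) by simp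
  moreover have nn: "0 \<le> 4 * (a + b)" using ab(3,4) by simp
  ultimately have "4 * (a + b) < l" using ennreal_less_iff[OF nn] by blast
  then have al: "a < l'" and bl: "b < l'" using ab by (auto simp: l'_def)
  have mg: "var_modular p E (\<lambda>y. g y / l') \<le> 1"
    using al ab l'0 by (intro vn_less_imp[OF _ l'0 p0]) (simp add: ennreal_less_iff)
  have "var_norm p E (\<lambda>y. L * v y) \<le> ennreal L * var_norm p E v" by (rule vn_scale[OF L p0])
  also have "\<dots> < ennreal l'" using bl ab l'0 by (simp add: ennreal_less_iff)
  finally have mv: "var_modular p E (\<lambda>y. L * v y / l') \<le> 1" by (rule vn_less_imp[OF _ l'0 p0])
  have pt: "AE y in lebesgue. indicator E y * ennreal (\<bar>h y / l\<bar> powr p y) \<le>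
      ennreal (1/2) * (indicator E y * ennreal (\<bar>g y / l'\<bar> powr p y)) +
      ennreal (1/2) * (indicator E y * ennreal (\<bar>L * v y / l'\<bar> powr p y))"
    using h
  proof eventually_elim
    case (elim y)
    show ?case
    proof (cases "y \<in> E")
      case True
      have "\<bar>h y / l\<bar> \<le> (\<bar>g y / l'\<bar> + \<bar>L * v y / l'\<bar>) / 4"
        using elim True l l'0 L by (auto simp: l'_def abs_mult abs_divide field_simps)
      then have "\<bar>h y / l\<bar> powr p y \<le> \<bar>g y / l'\<bar> powr p y / 2 + \<bar>L * v y / l'\<bar> powr p y / 2"
        using p1 by (intro split_powr) auto
      then have "ennreal (\<bar>h y / l\<bar> powr p y) \<le> ennreal (1/2 * \<bar>g y / l'\<bar> powr p y + 1/2 * \<bar>L * v y / l'\<bar> powr p y)"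
        by (intro ennreal_leI) simp
      also have "\<dots> = ennreal (1/2) * ennreal (\<bar>g y / l'\<bar> powr p y) + ennreal (1/2) * ennreal (\<bar>L * v y / l'\<bar> powr p y)"
        by (rule half_sum) auto
      finally show ?thesis using True by simp
    qed simp
  qed
  have "var_modular p E (\<lambda>y. h y / l) \<le>
      (\<integral>\<^sup>+y. ennreal (1/2) * (indicator E y * ennreal (\<bar>g y / l'\<bar> powr p y)) +
      ennreal (1/2) * (indicator E y * ennreal (\<bar>L * v y / l'\<bar> powr p y)) \<partial>lebesgue)"
    unfolding var_modular_def using pt by (intro nn_integral_mono_AE) (simp add: abs_divide)
  also have "\<dots> \<le> (\<integral>\<^sup>+y. ennreal (1/2) * (indicator E y * ennreal (\<bar>g y / l'\<bar> powr p y)) \<partial>lebesgue) +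
      (\<integral>\<^sup>+y. ennreal (1/2) * (indicator E y * ennreal (\<bar>L * v y / l'\<bar> powr p y)) \<partial>lebesgue)"
    by (rule nn_integral_add_le) measurable
  also have "\<dots> \<le> ennreal (1/2) * var_modular p E (\<lambda>y. g y / l') + ennreal (1/2) * var_modular p E (\<lambda>y. L * v y / l')"
    unfolding var_modular_def
    by (intro add_mono nn_integral_cmult_le[OF ennreal_less_top])
  also have "\<dots> \<le> ennreal (1/2) * 1 + ennreal (1/2) * 1"
    using mg mv by (intro add_mono mult_left_mono) auto
  also have "\<dots> = 1" using ennreal_plus[of "1/2" "1/2"] by simp
  finally show "var_modular p E (\<lambda>y. h y / l) \<le> 1" .
qed



lemma conj_exp_nonneg: assumes "\<forall>y. 1 \<le> p y" shows "\<forall>y. 0 \<le> conj_exp p y"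
proof
  fix y have "1 \<le> p y" using assms by blast
  then show "0 \<le> conj_exp p y" unfolding conj_exp_def by (intro divide_nonneg_nonneg) auto
qed

lemma eps_arith:
  fixes n1 n2 e :: real
  assumes "0 \<le> n1" "0 \<le> n2" "0 < e"
  defines "d \<equiv> min 1 (e / (2 * (n1 + n2 + 1)))"
  shows "0 < d" "2 * (n1 + d) * (n2 + d) \<le> 2 * n1 * n2 + e"
proof -
  show d0: "0 < d" using assms by (auto simp: d_def)
  have d1: "d \<le> 1" by (simp add: d_def)
  have "d * d \<le> d" using d0 d1 by (simp add: mult_left_le_one_le)
  have "d \<le> e / (2 * (n1 + n2 + 1))" by (simp add: d_def)
  moreover have X: "0 < 2 * (n1 + n2 + 1)" using assms by simp
  ultimately have "d * (2 * (n1 + n2 + 1)) \<le> e" using pos_le_divide_eq[OF X] by blast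
  have "2 * (n1 + d) * (n2 + d) = 2 * n1 * n2 + 2 * d * (n1 + n2) + 2 * (d * d)" by (simp add: algebra_simps)
  also have "\<dots> \<le> 2 * n1 * n2 + 2 * d * (n1 + n2) + 2 * d" using \<open>d * d \<le> d\<close> by simp
  also have "\<dots> = 2 * n1 * n2 + d * (2 * (n1 + n2 + 1))" by (simp add: algebra_simps)
  also have "\<dots> \<le> 2 * n1 * n2 + e" using \<open>d * (2 * (n1 + n2 + 1)) \<le> e\<close> by simp
  finally show "2 * (n1 + d) * (n2 + d) \<le> 2 * n1 * n2 + e" .
qed

lemma holder:
  assumes pm[measurable]: "p \<in> borel_measurable lebesgue" and p1: "\<forall>y. 1 \<le> p y"
    and pae: "AE y in lebesgue. 1 < p y"
    and fm[measurable]: "f \<in> borel_measurable lebesgue" and gm[measurable]: "g \<in> borel_measurable lebesgue"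
    and E[measurable]: "E \<in> sets lebesgue"
    and nf: "var_norm p E f < top" and ng: "var_norm (conj_exp p) E g < top"
  shows "(\<integral>\<^sup>+y. indicator E y * ennreal \<bar>f y * g y\<bar> \<partial>lebesgue) \<le> 2 * var_norm p E f * var_norm (conj_exp p) E g"
proof -
  have p0: "\<forall>y. 0 \<le> p y" using p1 by (auto intro: order_trans[OF zero_le_one])
  have q0: "\<forall>y. 0 \<le> conj_exp p y" using p1 by (rule conj_exp_nonneg)
  have qm[measurable]: "conj_exp p \<in> borel_measurable lebesgue" unfolding conj_exp_def by measurable
  obtain n1 where n1: "var_norm p E f = ennreal n1" "0 \<le> n1" using nf unfolding less_top_ennreal by blast
  obtain n2 where n2: "var_norm (conj_exp p) E g = ennreal n2" "0 \<le> n2" using ng unfolding less_top_ennreal by blast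
  let ?I = "(\<integral>\<^sup>+y. indicator E y * ennreal \<bar>f y * g y\<bar> \<partial>lebesgue)"
  have key: "?I \<le> ennreal (2 * l1 * l2)" if l: "n1 < l1" "n2 < l2" for l1 l2
  proof -
    have l0: "0 < l1" "0 < l2" using l n1 n2 by auto
    have mf: "var_modular p E (\<lambda>y. f y / l1) \<le> 1"
      using l n1 by (intro vn_less_imp[OF _ l0(1) p0]) (simp add: ennreal_less_iff)
    have mg: "var_modular (conj_exp p) E (\<lambda>y. g y / l2) \<le> 1"
      using l n2 by (intro vn_less_imp[OF _ l0(2) q0]) (simp add: ennreal_less_iff)
    have "?I = (\<integral>\<^sup>+y. ennreal (l1 * l2) * (indicator E y * ennreal \<bar>f y / l1 * (g y / l2)\<bar>) \<partial>lebesgue)"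
    proof (intro nn_integral_cong)
      fix y
      have "\<bar>f y * g y\<bar> = (l1 * l2) * \<bar>f y / l1 * (g y / l2)\<bar>" using l0 by (simp add: abs_mult abs_divide)
      moreover have "ennreal ((l1 * l2) * \<bar>f y / l1 * (g y / l2)\<bar>) = ennreal (l1 * l2) * ennreal \<bar>f y / l1 * (g y / l2)\<bar>"
        using l0 by (intro ennreal_mult) auto
      ultimately have eq: "ennreal \<bar>f y * g y\<bar> = ennreal (l1 * l2) * ennreal \<bar>f y / l1 * (g y / l2)\<bar>" by metis
      show "indicator E y * ennreal \<bar>f y * g y\<bar> = ennreal (l1 * l2) * (indicator E y * ennreal \<bar>f y / l1 * (g y / l2)\<bar>)"
        by (simp only: eq) (rule mult.left_commute)
    qed
    also have "\<dots> = ennreal (l1 * l2) * (\<integral>\<^sup>+y. indicator E y * ennreal \<bar>f y / l1 * (g y / l2)\<bar> \<partial>lebesgue)"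
      by (rule nn_integral_cmult) measurable
    finally have Ieq: "?I = ennreal (l1 * l2) * (\<integral>\<^sup>+y. indicator E y * ennreal \<bar>f y / l1 * (g y / l2)\<bar> \<partial>lebesgue)" .
    have "(\<integral>\<^sup>+y. indicator E y * ennreal \<bar>f y / l1 * (g y / l2)\<bar> \<partial>lebesgue) \<le>
        (\<integral>\<^sup>+y. indicator E y * ennreal (\<bar>f y / l1\<bar> powr p y) + indicator E y * ennreal (\<bar>g y / l2\<bar> powr conj_exp p y) \<partial>lebesgue)"
      using pae
    proof (intro nn_integral_mono_AE, eventually_elim)
      case (elim y)
      have "\<bar>f y / l1 * (g y / l2)\<bar> \<le> \<bar>f y / l1\<bar> powr p y + \<bar>g y / l2\<bar> powr (p y / (p y - 1))"
        using young_lite[of "\<bar>f y / l1\<bar>" "\<bar>g y / l2\<bar>" "p y"] elim by (simp add: abs_mult)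
      then have "ennreal \<bar>f y / l1 * (g y / l2)\<bar> \<le> ennreal (\<bar>f y / l1\<bar> powr p y + \<bar>g y / l2\<bar> powr conj_exp p y)"
        unfolding conj_exp_def by (rule ennreal_leI)
      also have "\<dots> = ennreal (\<bar>f y / l1\<bar> powr p y) + ennreal (\<bar>g y / l2\<bar> powr conj_exp p y)"
        by (rule ennreal_plus) auto
      finally have "ennreal \<bar>f y / l1 * (g y / l2)\<bar> \<le> ennreal (\<bar>f y / l1\<bar> powr p y) + ennreal (\<bar>g y / l2\<bar> powr conj_exp p y)" .
      then show ?case by (auto split: split_indicator)
    qed
    also have "\<dots> = var_modular p E (\<lambda>y. f y / l1) + var_modular (conj_exp p) E (\<lambda>y. g y / l2)"
      unfolding var_modular_def by (rule nn_integral_add) measurable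
    also have "\<dots> \<le> 2" using mf mg by (metis add_mono one_add_one)
    finally have X2: "(\<integral>\<^sup>+y. indicator E y * ennreal \<bar>f y / l1 * (g y / l2)\<bar> \<partial>lebesgue) \<le> 2" .
    have "?I \<le> ennreal (l1 * l2) * 2" unfolding Ieq by (rule mult_left_mono[OF X2]) simp
    also have "\<dots> = ennreal (2 * l1 * l2)" using l0 by (simp add: ennreal_mult mult.commute mult.left_commute)
    finally show "?I \<le> ennreal (2 * l1 * l2)" .
  qed
  show ?thesis
  proof (rule ennreal_le_epsilon)
    fix e :: real assume "0 < e"
    define d where "d = min 1 (e / (2 * (n1 + n2 + 1)))"
    have d: "0 < d" "2 * (n1 + d) * (n2 + d) \<le> 2 * n1 * n2 + e"
      using eps_arith[OF n1(2) n2(2) \<open>0 < e\<close>] by (simp_all add: d_def)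
    have "?I \<le> ennreal (2 * (n1 + d) * (n2 + d))" using key[of "n1 + d" "n2 + d"] d by (simp add: mult.assoc)
    also have "\<dots> \<le> ennreal (2 * n1 * n2 + e)" using d by (intro ennreal_leI) 
    also have "\<dots> = 2 * var_norm p E f * var_norm (conj_exp p) E g + ennreal e"
      using n1 n2 \<open>0<e\<close> by (simp add: ennreal_plus ennreal_mult)
    finally show "?I \<le> 2 * var_norm p E f * var_norm (conj_exp p) E g + ennreal e" .
  qed
qed



lemma ball_meas:
  fixes x :: "'a::euclidean_space"
  assumes "0 < r"
  shows "0 < emeasure lebesgue (ball x r)" "emeasure lebesgue (ball x r) < top"
proof -
  have e: "emeasure lebesgue (ball x r) = emeasure lborel (ball x r)"
    by simp
  show "emeasure lebesgue (ball x r) < top" using e emeasure_lborel_ball_finite by simp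
  have "emeasure lborel (ball x r) = ennreal (measure lborel (ball x r))"
    by (intro emeasure_eq_ennreal_measure) (use emeasure_lborel_ball_finite[of x r] in auto)
  then show "0 < emeasure lebesgue (ball x r)" using e content_ball_pos[OF assms, of x] by simp
qed

lemma vn_pos:
  assumes qae: "AE y in lebesgue. 1 \<le> q y" and q0: "\<forall>y. 0 \<le> q y"
    and wm[measurable]: "w \<in> borel_measurable lebesgue" and wpos: "\<forall>y. 0 < w y"
    and E[measurable]: "E \<in> sets lebesgue" and Epos: "0 < emeasure lebesgue E"
  shows "0 < var_norm q E w"
proof (rule ccontr)
  assume "\<not> 0 < var_norm q E w"
  then have N0: "var_norm q E w = 0" by (simp add: zero_less_iff_neq_zero)
  define Ek where "Ek k = {y \<in> space lebesgue. y \<in> E \<and> 1 / real (Suc k) \<le> w y}" for k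
  have Ekm[measurable]: "Ek k \<in> sets lebesgue" for k unfolding Ek_def by measurable
  have "E \<subseteq> (\<Union>k. Ek k)"
  proof
    fix y assume "y \<in> E"
    obtain n where n: "n > 0" "inverse (real n) < w y" using ex_inverse_of_nat_less[of "w y"] wpos by blast
    then have "Suc (n - 1) = n" by simp
    then show "y \<in> (\<Union>k. Ek k)" using \<open>y \<in> E\<close> n by (auto simp: Ek_def inverse_eq_divide intro!: exI[of _ "n - 1"])
  qed
  moreover have "(\<Union>k. Ek k) \<subseteq> E" by (auto simp: Ek_def)
  ultimately have EU: "E = (\<Union>k. Ek k)" by blast
  obtain k where k: "emeasure lebesgue (Ek k) \<noteq> 0"
  proof (rule ccontr)
    assume "\<not> thesis"
    then have "\<And>k. emeasure lebesgue (Ek k) = 0" using that by blast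
    then have "emeasure lebesgue (\<Union>k. Ek k) = 0" by (intro emeasure_UN_eq_0) auto
    with EU Epos show False by simp
  qed
  then obtain c' where c': "0 < c'" "c' < emeasure lebesgue (Ek k)"
    using dense[of 0 "emeasure lebesgue (Ek k)"] by (auto simp: zero_less_iff_neq_zero)
  have "c' < top" using c'(2) less_le_trans top_greatest by blast
  then obtain c0 where c0: "c' = ennreal c0" "0 \<le> c0" unfolding less_top_ennreal by blast
  then have "0 < c0" using c'(1) by simp
  with c0 obtain c where c: "c' = ennreal c" "0 < c" by blast
  define M where "M = 2 / c + 1"
  have M1: "1 \<le> M" using c by (simp add: M_def)
  define l where "l = 1 / (real (Suc k) * M)"
  have l0: "0 < l" using M1 by (simp add: l_def)
  have "var_norm q E w < ennreal l" using N0 l0 by simp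
  from vn_less_imp[OF this l0 q0] have m1: "var_modular q E (\<lambda>y. w y / l) \<le> 1" .
  have "(\<integral>\<^sup>+y. ennreal M * indicator (Ek k) y \<partial>lebesgue) \<le> var_modular q E (\<lambda>y. w y / l)"
    unfolding var_modular_def using qae
  proof (intro nn_integral_mono_AE, eventually_elim)
    case (elim y)
    show ?case
    proof (cases "y \<in> Ek k")
      case True
      then have yE: "y \<in> E" and wy: "1 / real (Suc k) \<le> w y" by (auto simp: Ek_def)
      have eq: "w y / l = (w y * real (Suc k)) * M" by (simp add: l_def)
      have a: "1 \<le> w y * real (Suc k)" using wy by (simp add: field_simps)
      have "1 * M \<le> (w y * real (Suc k)) * M" using M1 by (intro mult_right_mono[OF a]) simp
      then have ge0: "M \<le> w y / l" unfolding eq by simp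
      have ge: "M \<le> \<bar>w y / l\<bar>" by (rule order_trans[OF ge0 abs_ge_self])
      have "\<bar>w y / l\<bar> powr 1 \<le> \<bar>w y / l\<bar> powr q y" using elim ge M1 by (intro powr_mono) auto
      then have "M \<le> \<bar>w y / l\<bar> powr q y" using ge M1 by simp
      then show ?thesis using True yE by (simp add: ennreal_leI)
    qed simp
  qed
  also note m1
  finally have "ennreal M * emeasure lebesgue (Ek k) \<le> 1" by (simp add: nn_integral_cmult_indicator)
  moreover have "ennreal M * ennreal c \<le> ennreal M * emeasure lebesgue (Ek k)"
    using c c' by (intro mult_left_mono) auto
  moreover have "ennreal M * ennreal c = ennreal (2 + c)"
  proof -
    have "M * c = 2 + c" using c by (simp add: M_def field_simps)
    moreover have "ennreal (M * c) = ennreal M * ennreal c" using c M1 by (intro ennreal_mult) auto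
    ultimately show ?thesis by simp
  qed
  ultimately have "ennreal (2 + c) \<le> 1" by (metis order_trans)
  then show False using c ennreal_le_1[of "2 + c"] by linarith
qed

lemma Linf_AE:
  assumes "B \<in> sets lebesgue"
  shows "AE y in lebesgue. y \<in> B \<longrightarrow> ennreal \<bar>g y\<bar> \<le> Linf_norm B g"
proof (cases "Linf_norm B g = top")
  case True then show ?thesis by simp
next
  case False
  let ?L = "Linf_norm B g"
  have "\<forall>n::nat. AE y in lebesgue. y \<in> B \<longrightarrow> ennreal \<bar>g y\<bar> \<le> ?L + ennreal (1 / Suc n)"
  proof
    fix n :: nat
    have "?L < ?L + ennreal (1 / Suc n)" using False by (simp add: ennreal_add_left_cancel_less less_top)
    then obtain c where c: "AE y in lebesgue. y \<in> B \<longrightarrow> ennreal \<bar>g y\<bar> \<le> c" "c < ?L + ennreal (1 / Suc n)"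
      unfolding Linf_norm_def by (auto simp: Inf_less_iff)
    then show "AE y in lebesgue. y \<in> B \<longrightarrow> ennreal \<bar>g y\<bar> \<le> ?L + ennreal (1 / Suc n)"
      by (auto elim!: eventually_mono)
  qed
  then have "AE y in lebesgue. \<forall>n::nat. y \<in> B \<longrightarrow> ennreal \<bar>g y\<bar> \<le> ?L + ennreal (1 / Suc n)"
    by (rule AE_all_countable[THEN iffD2])
  then show ?thesis
  proof (eventually_elim, intro impI)
    case (elim y)
    assume yB: "y \<in> B"
    show "ennreal \<bar>g y\<bar> \<le> ?L"
    proof (rule ennreal_le_epsilon)
      fix e :: real assume "0 < e"
      then obtain n0 where n0: "n0 > 0" "inverse (real n0) < e" using ex_inverse_of_nat_less by blast
      define n where "n = n0 - 1"
      have "Suc n = n0" using n0 by (simp add: n_def)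
      then have n: "inverse (real (Suc n)) < e" using n0 by simp
      have "ennreal \<bar>g y\<bar> \<le> ?L + ennreal (1 / Suc n)" using elim yB by blast
      also have "\<dots> \<le> ?L + ennreal e" using n by (intro add_left_mono ennreal_leI) (simp add: inverse_eq_divide)
      finally show "ennreal \<bar>g y\<bar> \<le> ?L + ennreal e" .
    qed
  qed
qed

lemma essinf_ge:
  assumes "\<forall>\<eta>\<in>S. c \<le> P * g \<eta>" "P < top" "\<eta>0 \<in> S"
  shows "c \<le> P * essinf_on S g"
proof (cases "P = 0")
  case True then show ?thesis using assms by auto
next
  case False
  have "c / P \<le> g \<eta>" if "\<eta> \<in> S" for \<eta>
    using assms that False by (intro divide_le_posI_ennreal) (auto simp: zero_less_iff_neq_zero)
  then have "c / P \<le> essinf_on S g" unfolding essinf_on_def by (intro Sup_upper) auto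
  then have "P * (c / P) \<le> P * essinf_on S g" by (rule mult_left_mono) simp
  moreover have "P * (c / P) = c" using False assms(2)
    by (simp add: ennreal_times_divide mult.commute[of P] ennreal_mult_divide_eq)
  ultimately show ?thesis by simp
qed



lemma expP:
  assumes "exponent_P p"
  shows "p \<in> borel_measurable lebesgue" "\<forall>y. 1 \<le> p y" "AE y in lebesgue. 1 < p y"
    "\<forall>y. 0 \<le> p y"
proof -
  show "p \<in> borel_measurable lebesgue" "\<forall>y. 1 \<le> p y" using assms by (auto simp: exponent_P_def)
  then show "\<forall>y. 0 \<le> p y" by (auto intro: order_trans[OF zero_le_one])
  from assms obtain pm pM where "1 < pm" "AE x in lebesgue. pm \<le> p x \<and> p x \<le> pM"
    by (auto simp: exponent_P_def)
  then show "AE y in lebesgue. 1 < p y" by (auto elim!: eventually_mono)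
qed

lemma conjP:
  assumes "exponent_P p"
  shows "conj_exp p \<in> borel_measurable lebesgue" "\<forall>y. 0 \<le> conj_exp p y" "AE y in lebesgue. 1 \<le> conj_exp p y"
proof -
  note e = expP[OF assms]
  have [measurable]: "p \<in> borel_measurable lebesgue" by (fact e(1))
  show "conj_exp p \<in> borel_measurable lebesgue" unfolding conj_exp_def by measurable
  show "\<forall>y. 0 \<le> conj_exp p y" by (rule conj_exp_nonneg[OF e(2)])
  show "AE y in lebesgue. 1 \<le> conj_exp p y" using e(3)
    by (auto elim!: eventually_mono simp: conj_exp_def field_simps)
qed

definition Aconst :: "('a::euclidean_space \<Rightarrow> real) \<Rightarrow> ('a \<Rightarrow> real) \<Rightarrow> ennreal" where
  "Aconst p w = (SUP z\<in>UNIV \<times> {0<..}. var_norm p (ball (fst z) (snd z)) w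
        * var_norm (conj_exp p) (ball (fst z) (snd z)) (\<lambda>y. 1 / w y)
        / emeasure lebesgue (ball (fst z) (snd z)))"

lemma Aconst_fin: "A_weight p w \<Longrightarrow> Aconst p w < top"
  by (simp add: A_weight_def Aconst_def)

lemma weight_ball:
  fixes x :: "'a::euclidean_space"
  assumes P: "exponent_P p" and A: "A_weight p w" and r: "0 < r"
  shows "0 < var_norm p (ball x r) w" "var_norm p (ball x r) w < top"
    "var_norm (conj_exp p) (ball x r) (\<lambda>y. 1 / w y) < top"
    "var_norm p (ball x r) w * var_norm (conj_exp p) (ball x r) (\<lambda>y. 1 / w y) \<le> Aconst p w * emeasure lebesgue (ball x r)"
proof -
  note e = expP[OF P] and c = conjP[OF P]
  have [measurable]: "p \<in> borel_measurable lebesgue" "conj_exp p \<in> borel_measurable lebesgue"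
    by (fact e(1) c(1))+
  have wm[measurable]: "w \<in> borel_measurable lebesgue" and wpos: "\<forall>y. 0 < w y"
    using A by (auto simp: A_weight_def weight_def)
  have wim: "(\<lambda>y. 1 / w y) \<in> borel_measurable lebesgue" by measurable
  have wipos: "\<forall>y. 0 < 1 / w y" using wpos by simp
  note bm = ball_meas[OF r, of x]
  have N1: "0 < var_norm p (ball x r) w"
    by (rule vn_pos[OF _ e(4) wm wpos]) (use e(2) bm in auto)
  show "0 < var_norm p (ball x r) w" by (fact N1)
  have N2: "0 < var_norm (conj_exp p) (ball x r) (\<lambda>y. 1 / w y)"
    by (rule vn_pos[OF c(3) c(2) wim wipos]) (use bm in auto)
  have At: "Aconst p w < top" using A by (simp add: A_weight_def Aconst_def)
  have "var_norm p (ball x r) w * var_norm (conj_exp p) (ball x r) (\<lambda>y. 1 / w y) / emeasure lebesgue (ball x r)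
      \<le> Aconst p w"
    unfolding Aconst_def using r by (intro SUP_upper2[of "(x, r)"]) auto
  then show prod: "var_norm p (ball x r) w * var_norm (conj_exp p) (ball x r) (\<lambda>y. 1 / w y) \<le> Aconst p w * emeasure lebesgue (ball x r)"
    using bm by (intro ediv_le_imp) auto
  also have "\<dots> < top" using At bm by (simp add: ennreal_mult_less_top)
  finally have pt: "var_norm p (ball x r) w * var_norm (conj_exp p) (ball x r) (\<lambda>y. 1 / w y) < top" .
  show "var_norm p (ball x r) w < top" using pt N2 by (auto simp: ennreal_mult_less_top top_unique)
  show "var_norm (conj_exp p) (ball x r) (\<lambda>y. 1 / w y) < top" using pt N1 by (auto simp: ennreal_mult_less_top top_unique)
qed



lemma morrey_ball:
  fixes x :: "'a::euclidean_space"
  assumes P: "exponent_P p" and A: "A_weight p w" and phi: "0 < \<phi> x t" and t: "0 < t"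
  shows "var_norm p (ball x t) (\<lambda>y. w y * f y) \<le> morrey_norm p \<phi> w f * (ennreal (\<phi> x t) * var_norm p (ball x t) w)"
proof -
  note wb = weight_ball[OF P A t, of x]
  have "var_norm p (ball x t) (\<lambda>y. w y * f y) / (ennreal (\<phi> x t) * var_norm p (ball x t) w) \<le> morrey_norm p \<phi> w f"
    unfolding morrey_norm_def using t by (intro SUP_upper2[of "(x, t)"]) auto
  then show ?thesis using wb phi by (intro ediv_le_imp) (auto simp: ennreal_mult_eq_top_iff)
qed

lemma ball_ratio:
  fixes x :: "'a::euclidean_space"
  assumes "0 < R" "R \<le> t" "t \<le> 2 * R"
  shows "emeasure lebesgue (ball x t) \<le> ennreal (2 ^ DIM('a)) * emeasure lebesgue (ball x R)"
proof -
  have "emeasure lebesgue (ball x t) = ennreal (t ^ DIM('a)) * emeasure lebesgue (ball (0::'a) 1)"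
    using assms by (intro emeasure_lebesgue_ball_conv_unit_ball) auto
  also have "\<dots> \<le> ennreal ((2 * R) ^ DIM('a)) * emeasure lebesgue (ball (0::'a) 1)"
    using assms by (intro mult_right_mono ennreal_leI power_mono) auto
  also have "ennreal ((2 * R) ^ DIM('a)) = ennreal (2 ^ DIM('a)) * ennreal (R ^ DIM('a))"
    using assms by (simp add: power_mult_distrib ennreal_mult)
  also have "ennreal (2 ^ DIM('a)) * ennreal (R ^ DIM('a)) * emeasure lebesgue (ball (0::'a) 1)
      = ennreal (2 ^ DIM('a)) * emeasure lebesgue (ball x R)"
    using assms by (subst emeasure_lebesgue_ball_conv_unit_ball[of R x]) (auto simp: mult.assoc)
  finally show ?thesis .
qed

lemma avg_est:
  fixes x :: "'a::euclidean_space"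
  assumes P: "exponent_P p" and A: "A_weight p w" and fm[measurable]: "f \<in> borel_measurable lebesgue"
    and nf: "var_norm p (ball x t) (\<lambda>y. w y * f y) < top"
    and R: "0 < R" "R < t" "t < 2 * R"
  shows "(\<integral>\<^sup>+y. indicator (ball x R) y * ennreal \<bar>f y\<bar> \<partial>lebesgue) / emeasure lebesgue (ball x R) * var_norm p (ball x t) w
       \<le> ennreal (2 ^ DIM('a)) * (2 * Aconst p w) * var_norm p (ball x t) (\<lambda>y. w y * f y)"
proof -
  note e = expP[OF P]
  have [measurable]: "p \<in> borel_measurable lebesgue" by (fact e(1))
  have wm[measurable]: "w \<in> borel_measurable lebesgue" and wpos: "\<forall>y. 0 < w y"
    using A by (auto simp: A_weight_def weight_def)
  have t: "0 < t" using R by simp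
  have wne[simp]: "w y \<noteq> 0" for y using wpos by (metis less_irrefl)
  note wb = weight_ball[OF P A t, of x]
  note bR = ball_meas[OF R(1), of x]
  let ?IR = "(\<integral>\<^sup>+y. indicator (ball x R) y * ennreal \<bar>f y\<bar> \<partial>lebesgue)"
  let ?N = "var_norm p (ball x t) w" and ?N' = "var_norm (conj_exp p) (ball x t) (\<lambda>y. 1 / w y)"
    and ?Nf = "var_norm p (ball x t) (\<lambda>y. w y * f y)"
  have "?IR \<le> (\<integral>\<^sup>+y. indicator (ball x t) y * ennreal \<bar>(w y * f y) * (1 / w y)\<bar> \<partial>lebesgue)"
    using R wpos by (intro nn_integral_mono) (auto split: split_indicator dest: spec[of _ "_"] simp: less_imp_neq[symmetric] order_less_imp_not_eq2)
  also have "\<dots> \<le> 2 * ?Nf * ?N'"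
    by (rule holder[OF e(1) e(2) e(3)]) (use nf wb in auto)
  finally have IR: "?IR \<le> 2 * ?Nf * ?N'" .
  have "?IR * ?N \<le> 2 * ?Nf * (?N' * ?N)" using mult_right_mono[OF IR, of ?N] by (simp add: mult.assoc)
  also have "?N' * ?N \<le> Aconst p w * emeasure lebesgue (ball x t)" using wb(4) by (simp add: mult.commute)
  also have "emeasure lebesgue (ball x t) \<le> ennreal (2 ^ DIM('a)) * emeasure lebesgue (ball x R)"
    using R by (intro ball_ratio) auto
  finally have "?IR * ?N \<le> emeasure lebesgue (ball x R) * (ennreal (2 ^ DIM('a)) * (2 * Aconst p w) * ?Nf)"
    by (simp add: mult_left_mono mult_right_mono ac_simps)
  then have fin: "?IR * ?N / emeasure lebesgue (ball x R) \<le> ennreal (2 ^ DIM('a)) * (2 * Aconst p w) * ?Nf"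
    using bR by (intro divide_le_posI_ennreal) auto
  have eq: "?IR / emeasure lebesgue (ball x R) * ?N = ?IR * ?N / emeasure lebesgue (ball x R)"
    by (simp only: ennreal_divide_times ennreal_times_divide)
  show ?thesis unfolding eq by (rule fin)
qed



definition tfn :: "nat set \<Rightarrow> 'a::euclidean_space \<Rightarrow> real \<Rightarrow> ('a \<Rightarrow> real) list \<Rightarrow> nat \<Rightarrow> 'a \<Rightarrow> real" where
  "tfn S x r fs i = (\<lambda>y. (if i \<in> S then indicator (- ball x (2 * r)) y
        else indicator (ball x (2 * r)) y) * (fs ! i) y)"

definition mixl :: "nat \<Rightarrow> nat \<Rightarrow> nat set \<Rightarrow> 'a::euclidean_space \<Rightarrow> real \<Rightarrow> ('a \<Rightarrow> real) list \<Rightarrow> ('a \<Rightarrow> real) list" where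
  "mixl m k S x r fs = map (\<lambda>i. if i < k then tfn S x r fs i else fs ! i) [0..<m]"

lemma trunc_list_tfn: "trunc_list m S x r fs = map (tfn S x r fs) [0..<m]"
  by (simp add: trunc_list_def tfn_def)

lemma mixl_m: "mixl m m S x r fs = trunc_list m S x r fs"
  by (simp add: mixl_def trunc_list_tfn)

lemma mixl_0: "length fs = m \<Longrightarrow> mixl m 0 S x r fs = fs"
  by (simp add: mixl_def) (metis map_nth)

lemma in_prod_mixl:
  assumes "in_prod m X fs" "\<And>S i. i < m \<Longrightarrow> tfn S x r fs i \<in> X i"
  shows "in_prod m X (mixl m k S x r fs)"
  using assms by (auto simp: in_prod_def mixl_def)

lemma Pow_Suc_split:
  fixes F :: "nat set \<Rightarrow> real"
  shows "(\<Sum>S\<in>Pow {..<Suc k}. F S) = (\<Sum>S\<in>Pow {..<k}. F S) + (\<Sum>S\<in>Pow {..<k}. F (insert k S))"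
proof -
  have P: "Pow {..<Suc k} = Pow {..<k} \<union> insert k ` Pow {..<k}"
    by (simp add: lessThan_Suc Pow_insert)
  have d: "Pow {..<k} \<inter> insert k ` Pow {..<k} = {}" by auto
  have inj: "inj_on (insert k) (Pow {..<k})"
    by (rule inj_onI) (metis PowD insert_ident lessThan_iff less_irrefl subsetD)
  have "(\<Sum>S\<in>Pow {..<Suc k}. F S) = (\<Sum>S\<in>Pow {..<k}. F S) + (\<Sum>S\<in>insert k ` Pow {..<k}. F S)"
    unfolding P by (rule sum.union_disjoint) (use d in auto)
  also have "(\<Sum>S\<in>insert k ` Pow {..<k}. F S) = (\<Sum>S\<in>Pow {..<k}. F (insert k S))"
    by (rule sum.reindex[OF inj, unfolded comp_def])
  finally show ?thesis .
qed

lemma decomp: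
  assumes sub: "m_sublinear m X T" and ip: "in_prod m X fs"
    and cl: "\<And>S i. i < m \<Longrightarrow> tfn S x r fs i \<in> X i"
  shows "k \<le> m \<Longrightarrow> \<bar>T fs y\<bar> \<le> (\<Sum>S\<in>Pow {..<k}. \<bar>T (mixl m k S x r fs) y\<bar>)"
proof (induction k)
  case 0
  have "length fs = m" using ip by (simp add: in_prod_def)
  then show ?case by (simp add: mixl_0)
next
  case (Suc k)
  then have k: "k < m" by simp
  have len: "length fs = m" using ip by (simp add: in_prod_def)
  have step: "\<bar>T (mixl m k S x r fs) y\<bar> \<le> \<bar>T (mixl m (Suc k) S x r fs) y\<bar> + \<bar>T (mixl m (Suc k) (insert k S) x r fs) y\<bar>"
    if S: "S \<subseteq> {..<k}" for S
  proof -
    let ?L = "mixl m k S x r fs"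
    let ?g = "tfn S x r fs k" and ?h = "tfn (insert k S) x r fs k"
    have kS: "k \<notin> S" using S by auto
    have ipL: "in_prod m X ?L" by (rule in_prod_mixl[OF ip cl])
    have gX: "?g \<in> X k" and hX: "?h \<in> X k" using cl k by auto
    have e1: "?L[k := (\<lambda>y. ?g y + ?h y)] = ?L"
    proof -
      have "(\<lambda>y. ?g y + ?h y) = fs ! k" using kS
        by (auto simp: tfn_def fun_eq_iff split: split_indicator)
      moreover have "?L ! k = fs ! k" using k by (simp add: mixl_def)
      ultimately show ?thesis by (metis list_update_id)
    qed
    have e2: "?L[k := ?g] = mixl m (Suc k) S x r fs"
    proof (rule nth_equalityI)
      show "length (?L[k := ?g]) = length (mixl m (Suc k) S x r fs)" by (simp add: mixl_def)
    next
      fix i assume "i < length (?L[k := ?g])"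
      then have i: "i < m" by (simp add: mixl_def)
      show "?L[k := ?g] ! i = mixl m (Suc k) S x r fs ! i"
        using i k by (cases "i = k") (simp_all add: mixl_def nth_list_update)
    qed
    have e3: "?L[k := ?h] = mixl m (Suc k) (insert k S) x r fs"
    proof (rule nth_equalityI)
      show "length (?L[k := ?h]) = length (mixl m (Suc k) (insert k S) x r fs)" by (simp add: mixl_def)
    next
      fix i assume "i < length (?L[k := ?h])"
      then have i: "i < m" by (simp add: mixl_def)
      show "?L[k := ?h] ! i = mixl m (Suc k) (insert k S) x r fs ! i"
      proof (cases "i < k")
        case True
        then have "tfn S x r fs i = tfn (insert k S) x r fs i" by (auto simp: tfn_def)
        then show ?thesis using True i by (simp add: mixl_def nth_list_update)
      next
        case False
        then show ?thesis using i k by (cases "i = k") (simp_all add: mixl_def nth_list_update)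
      qed
    qed
    from sub ipL k gX hX
    have "\<bar>T (?L[k := (\<lambda>y. ?g y + ?h y)]) y\<bar> \<le> \<bar>T (?L[k := ?g]) y\<bar> + \<bar>T (?L[k := ?h]) y\<bar>"
      unfolding m_sublinear_def by blast
    then show ?thesis unfolding e1 e2 e3 .
  qed
  have "\<bar>T fs y\<bar> \<le> (\<Sum>S\<in>Pow {..<k}. \<bar>T (mixl m k S x r fs) y\<bar>)" using Suc by simp
  also have "\<dots> \<le> (\<Sum>S\<in>Pow {..<k}. \<bar>T (mixl m (Suc k) S x r fs) y\<bar> + \<bar>T (mixl m (Suc k) (insert k S) x r fs) y\<bar>)"
    by (intro sum_mono step) auto
  also have "\<dots> = (\<Sum>S\<in>Pow {..<Suc k}. \<bar>T (mixl m (Suc k) S x r fs) y\<bar>)"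
    by (simp add: Pow_Suc_split sum.distrib)
  finally show ?case .
qed

lemma decomp_full:
  assumes sub: "m_sublinear m X T" and ip: "in_prod m X fs"
    and cl: "\<And>S i. i < m \<Longrightarrow> tfn S x r fs i \<in> X i"
  shows "\<bar>T fs y\<bar> \<le> \<bar>T (trunc_list m {} x r fs) y\<bar> + (\<Sum>S\<in>Pow {..<m} - {{}}. \<bar>T (trunc_list m S x r fs) y\<bar>)"
proof -
  have "\<bar>T fs y\<bar> \<le> (\<Sum>S\<in>Pow {..<m}. \<bar>T (trunc_list m S x r fs) y\<bar>)"
    using decomp[OF sub ip cl, of m y] by (simp add: mixl_m)
  also have "\<dots> = \<bar>T (trunc_list m {} x r fs) y\<bar> + (\<Sum>S\<in>Pow {..<m} - {{}}. \<bar>T (trunc_list m S x r fs) y\<bar>)"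
    by (subst sum.remove[of _ "{}"]) auto
  finally show ?thesis .
qed



lemma ediv_real: "0 < t \<Longrightarrow> a / ennreal t = a * ennreal (1 / t)"
  by (simp add: divide_ennreal_def inverse_ennreal inverse_eq_divide)

lemma dyadic_sum:
  fixes G :: "real \<Rightarrow> ennreal" and d :: "nat \<Rightarrow> ennreal" and Q :: ennreal and r :: real
  assumes r: "0 < r" and Q: "Q < top"
    and bound: "\<And>j t. 2 ^ (j + 2) * r < t \<Longrightarrow> t < 2 * (2 ^ (j + 2) * r) \<Longrightarrow> d j \<le> Q * G t"
  shows "(\<Sum>j. d j) \<le> 2 * Q * (\<integral>\<^sup>+t. indicator {r<..} t * G t / ennreal t \<partial>lborel)"
proof -
  define R where "R j = 2 ^ (j + 2) * r" for j :: nat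
  define I where "I j = {R j <..< 2 * R j}" for j
  define c where "c j = d j * ennreal (1 / (2 * R j))" for j
  have R0: "0 < R j" for j using r by (simp add: R_def)
  have Rr: "r < R j" for j
  proof -
    have "(1::real) < 2 ^ (j + 2)" by (rule one_less_power) auto
    then have "1 * r < 2 ^ (j + 2) * r" using r by (intro mult_strict_right_mono) auto
    then show ?thesis by (simp add: R_def)
  qed
  have RS: "2 * R j = R (Suc j)" for j by (simp add: R_def)
  have Rmono: "j \<le> k \<Longrightarrow> R j \<le> R k" for j k
    using r by (auto simp: R_def intro!: mult_right_mono power_increasing)
  have disj: "j = k" if "t \<in> I j" "t \<in> I k" for t j k
  proof (rule ccontr)
    assume "j \<noteq> k"
    then consider "Suc j \<le> k" | "Suc k \<le> j" by linarith
    then show False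
    proof cases
      case 1 then have "R (Suc j) \<le> R k" by (rule Rmono)
      with that show False by (auto simp: I_def RS[symmetric])
    next
      case 2 then have "R (Suc k) \<le> R j" by (rule Rmono)
      with that show False by (auto simp: I_def RS[symmetric])
    qed
  qed
  define F where "F t = (\<Sum>j. c j * indicator (I j) t)" for t
  have Fle: "F t \<le> Q * (indicator {r<..} t * G t / ennreal t)" for t
  proof (cases "\<exists>k. t \<in> I k")
    case True
    then obtain k where k: "t \<in> I k" by blast
    have "(\<lambda>j. c j * indicator (I j) t) = (\<lambda>j. if j = k then c k else 0)"
      using disj k by (auto simp: fun_eq_iff split: split_indicator)
    then have "F t = c k" unfolding F_def using sums_unique[OF sums_single[of k "\<lambda>_. c k"]] by simp
    also have "c k \<le> Q * G t * ennreal (1 / t)"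
    proof -
      have t: "R k < t" "t < 2 * R k" using k by (auto simp: I_def)
      have "d k \<le> Q * G t" using bound[of k t] t by (simp add: R_def)
      moreover have "ennreal (1 / (2 * R k)) \<le> ennreal (1 / t)"
        using t R0[of k] by (intro ennreal_leI divide_left_mono) auto
      ultimately show ?thesis unfolding c_def by (intro mult_mono) auto
    qed
    also have "\<dots> = Q * (indicator {r<..} t * G t / ennreal t)"
    proof -
      have "R k < t" using k by (auto simp: I_def)
      then have "r < t" "0 < t" using Rr[of k] r by auto
      then show ?thesis by (simp add: ediv_real mult.assoc)
    qed
    finally show ?thesis .
  next
    case False
    then have "F t = 0" by (auto simp: F_def)
    then show ?thesis by simp
  qed
  have "(\<integral>\<^sup>+t. F t \<partial>lborel) = (\<Sum>j. \<integral>\<^sup>+t. c j * indicator (I j) t \<partial>lborel)"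
    unfolding F_def by (rule nn_integral_suminf) (auto simp: I_def)
  also have "\<dots> = (\<Sum>j. c j * emeasure lborel (I j))"
    by (intro suminf_cong nn_integral_cmult_indicator) (auto simp: I_def)
  also have "\<dots> = (\<Sum>j. d j * ennreal (1 / 2))"
  proof (intro suminf_cong)
    fix j
    have "emeasure lborel (I j) = ennreal (R j)" using R0[of j] by (simp add: I_def)
    moreover have "ennreal (1 / (2 * R j)) * ennreal (R j) = ennreal (1 / 2)"
      using R0[of j] by (simp add: ennreal_mult[symmetric] del: ennreal_mult')
    ultimately show "c j * emeasure lborel (I j) = d j * ennreal (1 / 2)"
      by (simp add: c_def mult.assoc)
  qed
  also have "\<dots> = (\<Sum>j. d j) * ennreal (1 / 2)" by simp
  finally have eqF: "(\<integral>\<^sup>+t. F t \<partial>lborel) = (\<Sum>j. d j) * ennreal (1 / 2)" .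
  have "(\<integral>\<^sup>+t. F t \<partial>lborel) \<le> (\<integral>\<^sup>+t. Q * (indicator {r<..} t * G t / ennreal t) \<partial>lborel)"
    by (intro nn_integral_mono Fle)
  also have "\<dots> \<le> Q * (\<integral>\<^sup>+t. indicator {r<..} t * G t / ennreal t \<partial>lborel)"
    by (rule nn_integral_cmult_le[OF Q])
  finally have "(\<Sum>j. d j) * ennreal (1 / 2) \<le> Q * (\<integral>\<^sup>+t. indicator {r<..} t * G t / ennreal t \<partial>lborel)"
    unfolding eqF .
  then have "(\<Sum>j. d j) * ennreal (1 / 2) * 2 \<le> Q * (\<integral>\<^sup>+t. indicator {r<..} t * G t / ennreal t \<partial>lborel) * 2"
    by (rule mult_right_mono) simp
  moreover have "ennreal (1 / 2) * 2 = 1" using ennreal_mult[of "1/2" 2] by simp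
  ultimately show ?thesis by (simp add: mult.assoc mult.commute mult.left_commute)
qed



lemma prod_less_top_ennreal:
  assumes "\<And>i. i \<in> A \<Longrightarrow> f i < (top::ennreal)" shows "(\<Prod>i\<in>A. f i) < top"
  using assms by (induction A rule: infinite_finite_induct) (auto simp: ennreal_mult_less_top)

lemma dj_bound:
  fixes x :: "'a::euclidean_space"
  assumes psP: "\<forall>i<m. exponent_P (ps i)" and wA: "\<forall>i<m. A_weight (ps i) (\<omega> i)"
    and phi: "\<forall>i<m. pos_meas_fun (\<phi>1 i)"
    and ip: "in_prod m (\<lambda>i. morrey_space (ps i) (\<phi>1 i) (\<omega> i)) fs"
    and R: "0 < R" "R < t" "t < 2 * R"
  shows "(\<Prod>i<m. (\<integral>\<^sup>+y. indicator (ball x R) y * ennreal \<bar>(fs ! i) y\<bar> \<partial>lebesgue) / emeasure lebesgue (ball x R))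
     \<le> ((\<Prod>i<m. ennreal (2 ^ DIM('a)) * (2 * Aconst (ps i) (\<omega> i))) * (\<Prod>i<m. morrey_norm (ps i) (\<phi>1 i) (\<omega> i) (fs ! i)))
       * (essinf_on {t<..} (\<lambda>\<eta>. \<Prod>i<m. ennreal (\<phi>1 i x \<eta>) * var_norm (ps i) (ball x \<eta>) (\<omega> i))
          / (\<Prod>i<m. var_norm (ps i) (ball x t) (\<omega> i)))"
proof -
  have t: "0 < t" using R by simp
  let ?a = "\<lambda>i. (\<integral>\<^sup>+y. indicator (ball x R) y * ennreal \<bar>(fs ! i) y\<bar> \<partial>lebesgue) / emeasure lebesgue (ball x R)"
  let ?N = "\<lambda>i. var_norm (ps i) (ball x t) (\<omega> i)"
  let ?Nf = "\<lambda>i. var_norm (ps i) (ball x t) (\<lambda>y. \<omega> i y * (fs ! i) y)"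
  let ?k = "\<lambda>i. ennreal (2 ^ DIM('a)) * (2 * Aconst (ps i) (\<omega> i))"
  let ?M = "\<lambda>i. morrey_norm (ps i) (\<phi>1 i) (\<omega> i) (fs ! i)"
  let ?E = "essinf_on {t<..} (\<lambda>\<eta>. \<Prod>i<m. ennreal (\<phi>1 i x \<eta>) * var_norm (ps i) (ball x \<eta>) (\<omega> i))"
  have fsX: "fs ! i \<in> morrey_space (ps i) (\<phi>1 i) (\<omega> i)" if "i < m" for i
    using ip that by (auto simp: in_prod_def)
  have Mfin: "?M i < top" if "i < m" for i using fsX[OF that] by (simp add: morrey_space_def)
  have fm: "fs ! i \<in> borel_measurable lebesgue" if "i < m" for i using fsX[OF that] by (simp add: morrey_space_def)
  have phipos: "0 < \<phi>1 i x s" if "i < m" "0 < s" for i s using phi that by (auto simp: pos_meas_fun_def)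
  have Nb: "0 < ?N i" "?N i < top" if "i < m" for i
    using weight_ball[OF psP[rule_format, OF that] wA[rule_format, OF that] t, of x] by auto
  have Nf_eta: "?Nf i \<le> ?M i * (ennreal (\<phi>1 i x \<eta>) * var_norm (ps i) (ball x \<eta>) (\<omega> i))"
    if "i < m" "t \<le> \<eta>" for i \<eta>
  proof -
    have "?Nf i \<le> var_norm (ps i) (ball x \<eta>) (\<lambda>y. \<omega> i y * (fs ! i) y)"
      using that by (intro vn_set_mono) auto
    also have "\<dots> \<le> ?M i * (ennreal (\<phi>1 i x \<eta>) * var_norm (ps i) (ball x \<eta>) (\<omega> i))"
      using that t by (intro morrey_ball psP[rule_format] wA[rule_format] phipos) auto
    finally show ?thesis .
  qed
  have Nffin: "?Nf i < top" if "i < m" for i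
  proof -
    have "?Nf i \<le> ?M i * (ennreal (\<phi>1 i x t) * ?N i)" using Nf_eta[OF that] by simp
    also have "\<dots> < top" using Mfin[OF that] Nb[OF that] by (simp add: ennreal_mult_less_top)
    finally show ?thesis .
  qed
  have ai: "?a i * ?N i \<le> ?k i * ?Nf i" if "i < m" for i
    using avg_est[OF psP[rule_format, OF that] wA[rule_format, OF that] fm[OF that] Nffin[OF that] R]
    by (simp add: mult.assoc)
  have "(\<Prod>i<m. ?a i) * (\<Prod>i<m. ?N i) = (\<Prod>i<m. ?a i * ?N i)" by (simp add: prod.distrib)
  also have "\<dots> \<le> (\<Prod>i<m. ?k i * ?Nf i)" by (intro prod_mono_ennreal ai) simp
  also have "\<dots> = (\<Prod>i<m. ?k i) * (\<Prod>i<m. ?Nf i)" by (simp add: prod.distrib)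
  also have "(\<Prod>i<m. ?Nf i) \<le> (\<Prod>i<m. ?M i) * ?E"
  proof (rule essinf_ge)
    show "t + 1 \<in> {t<..}" by simp
    show "(\<Prod>i<m. ?M i) < top" using Mfin by (intro prod_less_top_ennreal) auto
    show "\<forall>\<eta>\<in>{t<..}. (\<Prod>i<m. ?Nf i) \<le> (\<Prod>i<m. ?M i) * (\<Prod>i<m. ennreal (\<phi>1 i x \<eta>) * var_norm (ps i) (ball x \<eta>) (\<omega> i))"
    proof
      fix \<eta> :: real assume "\<eta> \<in> {t<..}"
      then have "(\<Prod>i<m. ?Nf i) \<le> (\<Prod>i<m. ?M i * (ennreal (\<phi>1 i x \<eta>) * var_norm (ps i) (ball x \<eta>) (\<omega> i)))"
        by (intro prod_mono_ennreal) (auto intro!: Nf_eta)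
      then show "(\<Prod>i<m. ?Nf i) \<le> (\<Prod>i<m. ?M i) * (\<Prod>i<m. ennreal (\<phi>1 i x \<eta>) * var_norm (ps i) (ball x \<eta>) (\<omega> i))"
        by (simp add: prod.distrib)
    qed
  qed
  finally have main: "(\<Prod>i<m. ?a i) * (\<Prod>i<m. ?N i) \<le> ((\<Prod>i<m. ?k i) * (\<Prod>i<m. ?M i)) * ?E"
    by (simp add: mult_left_mono mult.assoc)
  have N0: "?N i \<noteq> 0" if "i < m" for i using Nb(1)[OF that] by simp
  have PN0: "(\<Prod>i<m. ?N i) \<noteq> 0" using N0 by auto
  have PNt: "(\<Prod>i<m. ?N i) \<noteq> top" using Nb prod_less_top_ennreal[of "{..<m}" ?N] by auto
  have "(\<Prod>i<m. ?a i) \<le> ((\<Prod>i<m. ?k i) * (\<Prod>i<m. ?M i)) * ?E / (\<Prod>i<m. ?N i)"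
    by (rule ele_div_intro[OF PN0 PNt main])
  then show ?thesis by (simp add: ennreal_times_divide)
qed



lemma morrey_mult:
  assumes q0: "\<forall>y. 0 \<le> q y" and f: "f \<in> morrey_space q \<phi> w"
    and cm[measurable]: "c \<in> borel_measurable lebesgue" and c1: "\<forall>y. \<bar>c y\<bar> \<le> 1"
  shows "(\<lambda>y. c y * f y) \<in> morrey_space q \<phi> w"
proof -
  have fm[measurable]: "f \<in> borel_measurable lebesgue" using f by (simp add: morrey_space_def)
  have "morrey_norm q \<phi> w (\<lambda>y. c y * f y) \<le> morrey_norm q \<phi> w f"
    unfolding morrey_norm_def
  proof (intro SUP_mono bexI)
    fix z :: "'a \<times> real"
    show "var_norm q (ball (fst z) (snd z)) (\<lambda>y. w y * (c y * f y)) / (ennreal (\<phi> (fst z) (snd z)) * var_norm q (ball (fst z) (snd z)) w)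
      \<le> var_norm q (ball (fst z) (snd z)) (\<lambda>y. w y * f y) / (ennreal (\<phi> (fst z) (snd z)) * var_norm q (ball (fst z) (snd z)) w)"
    proof (intro divide_right_mono_ennreal vn_mono[OF q0] AE_I2 impI)
      fix y
      have "\<bar>c y\<bar> * \<bar>w y * f y\<bar> \<le> 1 * \<bar>w y * f y\<bar>" using c1 by (intro mult_right_mono) auto
      then show "\<bar>w y * (c y * f y)\<bar> \<le> \<bar>w y * f y\<bar>" by (simp add: abs_mult ac_simps)
    qed
  qed
  also have "\<dots> < top" using f by (simp add: morrey_space_def)
  finally show ?thesis by (simp add: morrey_space_def)
qed

lemma tfn_in:
  assumes q0: "\<forall>y. 0 \<le> q y" and f: "fs ! i \<in> morrey_space q \<phi> w"
  shows "tfn S x r fs i \<in> morrey_space q \<phi> w"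
  unfolding tfn_def
proof (rule morrey_mult[OF q0 f])
  show "(\<lambda>y. if i \<in> S then indicator (- ball x (2 * r)) y else indicator (ball x (2 * r)) y :: real) \<in> borel_measurable lebesgue"
  proof -
    have b: "ball x (2 * r) \<in> sets lebesgue" by (rule fmeasurableD) simp
    then have "- ball x (2 * r) \<in> sets lebesgue"
      using sets.compl_sets[OF b] by (simp add: Compl_eq_Diff_UNIV)
    with b show ?thesis by (cases "i \<in> S") (auto intro!: borel_measurable_indicator)
  qed
qed (auto split: split_indicator)



theorem theorem1p5:
  fixes m :: nat
    and p :: "'a::euclidean_space \<Rightarrow> real"
    and ps :: "nat \<Rightarrow> 'a \<Rightarrow> real"
    and \<omega> :: "nat \<Rightarrow> 'a \<Rightarrow> real"
    and v :: "'a \<Rightarrow> real"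
    and \<phi>1 :: "nat \<Rightarrow> 'a \<Rightarrow> real \<Rightarrow> real"
    and \<phi>2 :: "'a \<Rightarrow> real \<Rightarrow> real"
    and T :: "('a \<Rightarrow> real) list \<Rightarrow> 'a \<Rightarrow> real"
  assumes p_P: "exponent_P p" and p_LH: "exponent_LH p"
    and ps_P: "\<forall>i<m. exponent_P (ps i)" and ps_LH: "\<forall>i<m. exponent_LH (ps i)"
    and p_sum: "\<forall>x. 1 / p x = (\<Sum>i<m. 1 / ps i x)"
    and \<omega>_A: "\<forall>i<m. A_weight (ps i) (\<omega> i)"
    and v_A: "A_weight p v"
    and \<phi>1_pos: "\<forall>i<m. pos_meas_fun (\<phi>1 i)"
    and \<phi>2_pos: "pos_meas_fun \<phi>2"
    and cond: "(SUP z\<in>UNIV \<times> {0<..}.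
        (\<integral>\<^sup>+ t. indicator {snd z<..} t *
           (essinf_on {t<..} (\<lambda>\<eta>. \<Prod>i<m. ennreal (\<phi>1 i (fst z) \<eta>) * var_norm (ps i) (ball (fst z) \<eta>) (\<omega> i))
            / (\<Prod>i<m. var_norm (ps i) (ball (fst z) t) (\<omega> i))) / ennreal t \<partial>lborel)
        / ennreal (\<phi>2 (fst z) (snd z))) < \<infinity>"
    and T_sub: "m_sublinear m (\<lambda>i. morrey_space (ps i) (\<phi>1 i) (\<omega> i)) T"
    and T_LS: "LS_class m (\<lambda>i. morrey_space (ps i) (\<phi>1 i) (\<omega> i)) T"
    and T_LB: "LB_class m (\<lambda>i. morrey_space (ps i) (\<phi>1 i) (\<omega> i))
                 (\<lambda>i. morrey_norm (ps i) (\<phi>1 i) (\<omega> i)) (morrey_norm p \<phi>2 v) T"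
  shows "\<exists>C::real. \<forall>fs. in_prod m (\<lambda>i. morrey_space (ps i) (\<phi>1 i) (\<omega> i)) fs \<longrightarrow>
           morrey_norm p \<phi>2 v (T fs) \<le> ennreal C * (\<Prod>i<m. morrey_norm (ps i) (\<phi>1 i) (\<omega> i) (fs ! i))"
  proof -
  let ?X = "\<lambda>i. morrey_space (ps i) (\<phi>1 i) (\<omega> i)"
  from T_LS obtain CS :: real where CS: "\<forall>x r fs S. 0 < r \<and> in_prod m ?X fs \<and> S \<subseteq> {..<m} \<and> S \<noteq> {} \<longrightarrow>
      Linf_norm (ball x r) (T (trunc_list m S x r fs)) \<le>
        ennreal CS * (\<Sum>j. \<Prod>i<m. (\<integral>\<^sup>+ y. indicator (ball x (2 ^ (j + 2) * r)) y * ennreal \<bar>(fs ! i) y\<bar> \<partial>lebesgue)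
                                 / emeasure lebesgue (ball x (2 ^ (j + 2) * r)))"
    unfolding LS_class_def by blast
  from T_LB obtain CB :: real where CB: "\<forall>x r fs. 0 < r \<and> in_prod m ?X fs \<longrightarrow>
      morrey_norm p \<phi>2 v (T (trunc_list m {} x r fs)) \<le> ennreal CB * (\<Prod>i<m. morrey_norm (ps i) (\<phi>1 i) (\<omega> i) (fs ! i))"
    unfolding LB_class_def by blast
  define KA where "KA = (\<Prod>i<m. ennreal (2 ^ DIM('a)) * (2 * Aconst (ps i) (\<omega> i)))"
  define Mc where "Mc = (SUP z\<in>UNIV \<times> {0<..}.
        (\<integral>\<^sup>+ t. indicator {snd z<..} t *
           (essinf_on {t<..} (\<lambda>\<eta>. \<Prod>i<m. ennreal (\<phi>1 i (fst z) \<eta>) * var_norm (ps i) (ball (fst z) \<eta>) (\<omega> i))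
            / (\<Prod>i<m. var_norm (ps i) (ball (fst z) t) (\<omega> i))) / ennreal t \<partial>lborel)
        / ennreal (\<phi>2 (fst z) (snd z)))"
  define cd where "cd = (of_nat (card (Pow {..<m} - {{}})) :: ennreal)"
  define Ctot where "Ctot = 4 * (ennreal CB + cd * (ennreal CS * (2 * KA * Mc)))"
  have KAt: "KA < top" unfolding KA_def
    using Aconst_fin \<omega>_A by (intro prod_less_top_ennreal) (auto simp: ennreal_mult_less_top)
  have Mct: "Mc < top" using cond by (simp add: Mc_def)
  have cdt: "cd < top" unfolding cd_def by (rule of_nat_less_top)
  have Ctop: "Ctot < top" using KAt Mct cdt by (simp add: Ctot_def ennreal_mult_less_top)
  note pe = expP[OF p_P]
  have pm[measurable]: "p \<in> borel_measurable lebesgue" by (fact pe(1))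
  have vm[measurable]: "v \<in> borel_measurable lebesgue" using v_A by (simp add: A_weight_def weight_def)
  show ?thesis
  proof (intro exI[of _ "enn2real Ctot"] allI impI)
    fix fs assume ip: "in_prod m ?X fs"
    define P where "P = (\<Prod>i<m. morrey_norm (ps i) (\<phi>1 i) (\<omega> i) (fs ! i))"
    have fsX: "fs ! i \<in> ?X i" if "i < m" for i using ip that by (auto simp: in_prod_def)
    have Pt: "P < top" unfolding P_def using fsX by (intro prod_less_top_ennreal) (auto simp: morrey_space_def)
    have eC: "ennreal (enn2real Ctot) = Ctot" using Ctop by simp
    show "morrey_norm p \<phi>2 v (T fs) \<le> ennreal (enn2real Ctot) * P"
      unfolding eC morrey_norm_def[of p \<phi>2 v]
    proof (rule SUP_least)
      fix z :: "'a \<times> real" assume z: "z \<in> UNIV \<times> {0<..}"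
      define x where "x = fst z"
      define r where "r = snd z"
      have r: "0 < r" using z by (auto simp: r_def)
      let ?B = "ball x r"
      have cl: "tfn S x r fs i \<in> ?X i" if "i < m" for S i
        using that pe fsX expP[OF ps_P[rule_format, OF that]] by (intro tfn_in[OF _ fsX[OF that]]) auto
      define d where "d j = (\<Prod>i<m. (\<integral>\<^sup>+ y. indicator (ball x (2 ^ (j + 2) * r)) y * ennreal \<bar>(fs ! i) y\<bar> \<partial>lebesgue)
                                 / emeasure lebesgue (ball x (2 ^ (j + 2) * r)))" for j
      define Ic where "Ic = (\<integral>\<^sup>+ t. indicator {r<..} t *
           (essinf_on {t<..} (\<lambda>\<eta>. \<Prod>i<m. ennreal (\<phi>1 i x \<eta>) * var_norm (ps i) (ball x \<eta>) (\<omega> i))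
            / (\<Prod>i<m. var_norm (ps i) (ball x t) (\<omega> i))) / ennreal t \<partial>lborel)"
      have phi2: "0 < \<phi>2 x r" using \<phi>2_pos r by (auto simp: pos_meas_fun_def)
      have Ic: "Ic \<le> Mc * ennreal (\<phi>2 x r)"
      proof (rule ediv_le_imp)
        show "Ic / ennreal (\<phi>2 x r) \<le> Mc" unfolding Mc_def Ic_def x_def r_def
          using z by (intro SUP_upper) auto
      qed (use phi2 in auto)
      have Sd: "(\<Sum>j. d j) \<le> 2 * (KA * P) * Ic"
        unfolding Ic_def
      proof (rule dyadic_sum[OF r])
        show "KA * P < top" using KAt Pt by (simp add: ennreal_mult_less_top)
        fix j t assume t: "2 ^ (j + 2) * r < t" "t < 2 * (2 ^ (j + 2) * r)"
        have "0 < 2 ^ (j + 2) * r" using r by simp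
        from dj_bound[OF ps_P \<omega>_A \<phi>1_pos ip this t, of x]
        show "d j \<le> KA * P * (essinf_on {t<..} (\<lambda>\<eta>. \<Prod>i<m. ennreal (\<phi>1 i x \<eta>) * var_norm (ps i) (ball x \<eta>) (\<omega> i))
            / (\<Prod>i<m. var_norm (ps i) (ball x t) (\<omega> i)))"
          by (simp add: d_def KA_def P_def)
      qed
      define Lsum where "Lsum = (\<Sum>S\<in>Pow {..<m} - {{}}. Linf_norm ?B (T (trunc_list m S x r fs)))"
      have LS1: "Linf_norm ?B (T (trunc_list m S x r fs)) \<le> ennreal CS * (\<Sum>j. d j)"
        if "S \<in> Pow {..<m} - {{}}" for S
        using CS ip that r unfolding d_def by blast
      have Lb: "Lsum \<le> cd * (ennreal CS * (2 * KA * Mc)) * (P * ennreal (\<phi>2 x r))"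
      proof -
        have "Lsum \<le> (\<Sum>S\<in>Pow {..<m} - {{}}. ennreal CS * (\<Sum>j. d j))"
          unfolding Lsum_def by (intro sum_mono LS1)
        also have "\<dots> = cd * (ennreal CS * (\<Sum>j. d j))" by (simp add: cd_def)
        also have "\<dots> \<le> cd * (ennreal CS * (2 * (KA * P) * (Mc * ennreal (\<phi>2 x r))))"
          using Sd Ic by (intro mult_left_mono order.trans[OF Sd]) auto
        also have "\<dots> = cd * (ennreal CS * (2 * KA * Mc)) * (P * ennreal (\<phi>2 x r))"
          by (simp add: ac_simps)
        finally show ?thesis .
      qed
      have Lsumt: "Lsum < top"
        using Lb KAt Mct cdt Pt by (auto simp: ennreal_mult_less_top elim!: le_less_trans)
      define Lr where "Lr = enn2real Lsum"
      have Lr: "ennreal Lr = Lsum" "0 \<le> Lr" using Lsumt by (auto simp: Lr_def)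
      have Bm: "?B \<in> sets lebesgue" by (rule fmeasurableD) simp
      have AEall: "AE y in lebesgue. \<forall>S\<in>Pow {..<m} - {{}}. y \<in> ?B \<longrightarrow>
          ennreal \<bar>T (trunc_list m S x r fs) y\<bar> \<le> Linf_norm ?B (T (trunc_list m S x r fs))"
        by (intro eventually_ball_finite ballI Linf_AE[OF Bm]) auto
      have AEh: "AE y in lebesgue. y \<in> ?B \<longrightarrow> \<bar>v y * T fs y\<bar> \<le> \<bar>v y * T (trunc_list m {} x r fs) y\<bar> + Lr * \<bar>v y\<bar>"
        using AEall
      proof (eventually_elim, intro impI)
        case (elim y)
        assume yB: "y \<in> ?B"
        have "ennreal (\<Sum>S\<in>Pow {..<m} - {{}}. \<bar>T (trunc_list m S x r fs) y\<bar>)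
            = (\<Sum>S\<in>Pow {..<m} - {{}}. ennreal \<bar>T (trunc_list m S x r fs) y\<bar>)" by simp
        also have "\<dots> \<le> Lsum" unfolding Lsum_def using elim yB by (intro sum_mono) auto
        finally have "ennreal (\<Sum>S\<in>Pow {..<m} - {{}}. \<bar>T (trunc_list m S x r fs) y\<bar>) \<le> ennreal Lr"
          unfolding Lr(1) .
        then have "(\<Sum>S\<in>Pow {..<m} - {{}}. \<bar>T (trunc_list m S x r fs) y\<bar>) \<le> Lr"
          using ennreal_le_iff[OF Lr(2)] by blast
        then have "\<bar>T fs y\<bar> \<le> \<bar>T (trunc_list m {} x r fs) y\<bar> + Lr"
          using decomp_full[OF T_sub ip cl, of y] by simp
        then have "\<bar>v y\<bar> * \<bar>T fs y\<bar> \<le> \<bar>v y\<bar> * (\<bar>T (trunc_list m {} x r fs) y\<bar> + Lr)"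
          by (intro mult_left_mono) auto
        then show "\<bar>v y * T fs y\<bar> \<le> \<bar>v y * T (trunc_list m {} x r fs) y\<bar> + Lr * \<bar>v y\<bar>"
          by (simp add: abs_mult algebra_simps)
      qed
      have Nv: "0 < var_norm p ?B v" "var_norm p ?B v < top"
        using weight_ball[OF p_P v_A r, of x] by auto
      have N1: "var_norm p ?B (\<lambda>y. v y * T fs y) \<le>
          4 * (var_norm p ?B (\<lambda>y. v y * T (trunc_list m {} x r fs) y) + ennreal Lr * var_norm p ?B v)"
        by (rule vn_sum2[OF pm pe(2) Bm vm Lr(2) AEh])
      have N0: "var_norm p ?B (\<lambda>y. v y * T (trunc_list m {} x r fs) y) \<le> ennreal CB * P * (ennreal (\<phi>2 x r) * var_norm p ?B v)"
      proof -
        have "var_norm p ?B (\<lambda>y. v y * T (trunc_list m {} x r fs) y)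
            \<le> morrey_norm p \<phi>2 v (T (trunc_list m {} x r fs)) * (ennreal (\<phi>2 x r) * var_norm p ?B v)"
          by (rule morrey_ball[where \<phi>=\<phi>2 and x=x and t=r, OF p_P v_A phi2 r])
        also have "\<dots> \<le> ennreal CB * P * (ennreal (\<phi>2 x r) * var_norm p ?B v)"
          using CB ip r unfolding P_def by (intro mult_right_mono) auto
        finally show ?thesis .
      qed
      have "var_norm p ?B (\<lambda>y. v y * T fs y) \<le>
          4 * (ennreal CB * P * (ennreal (\<phi>2 x r) * var_norm p ?B v) +
               (cd * (ennreal CS * (2 * KA * Mc)) * (P * ennreal (\<phi>2 x r))) * var_norm p ?B v)"
        using N1 N0 Lb Lr(1) by (elim order.trans) (intro mult_left_mono add_mono mult_right_mono; simp)
      also have "\<dots> = (ennreal (\<phi>2 x r) * var_norm p ?B v) * (Ctot * P)"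
        by (simp only: Ctot_def distrib_left distrib_right ac_simps)
      finally have fin: "var_norm p ?B (\<lambda>y. v y * T fs y) \<le> (ennreal (\<phi>2 x r) * var_norm p ?B v) * (Ctot * P)" .
      have "var_norm p ?B (\<lambda>y. v y * T fs y) / (ennreal (\<phi>2 x r) * var_norm p ?B v) \<le> Ctot * P"
        using Nv phi2 by (intro divide_le_posI_ennreal fin) (auto simp: zero_less_iff_neq_zero)
      then show "var_norm p (ball (fst z) (snd z)) (\<lambda>y. v y * T fs y) /
          (ennreal (\<phi>2 (fst z) (snd z)) * var_norm p (ball (fst z) (snd z)) v) \<le> Ctot * P"
        by (simp add: x_def r_def)
    qed
  qed
qed


end
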